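(* Let $((x_n,y_n))_{n\in\mathbb N}$ be a sequence in $[0,\infty)^2$ such that $\sum_n(x_n,y_n)$ converges, and let $k\in\mathbb N$. Write $E:=E(x_n,y_n)$. (a) Let $A:=\{n:\ x_n<x_k\}$. If $x_k>\sum_{n\in A}x_n$, then $(\sum_{n\in A}x_n,\,x_k)$ is an $x$-gap of $E$. (b) Let $A:=\{n:\ y_n<y_k\}$. If $y_k>\sum_{n\in A}y_n$, then $(\sum_{n\in A}y_n,\,y_k)$ is a $y$-gap of $E$. (c) Assume that $A:=\{n:\ x_n<x_k\}=\{n:\ y_n<y_k\}$. If $x_k>\sum_{n\in A}x_n$ and $y_k>\sum_{n\in A}y_n$, then $(\sum_{n\in A}x_n,\,x_k)\times(\sum_{n\in A}y_n,\,y_k)$ is a rectangular gap of $E$.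
   Context: $E(x_n,y_n):=\{\sum_{n\in B}(x_n,y_n):\ B\subset\mathbb N\}$ is the achievement set of the series. For $A\subset\mathbb R^2$ and reals $a<b$, $c<d$: the set $(a,b)\times(c,d)$ is a rectangular gap of $A$ if $([a,b]\times[c,d])\cap A=\{(a,c),(b,d)\}$; the interval $(a,b)$ is an $x$-gap of $A$ if there exist $c,d\in\mathbb R$ with $(a,c),(b,d)\in A$ and $((a,b)\times\mathbb R)\cap A=\emptyset$; the interval $(c,d)$ is a $y$-gap of $A$ if there exist $a,b\in\mathbb R$ with $(a,c),(b,d)\in A$ and $(\mathbb R\times(c,d))\cap A=\emptyset$. *)

theory Defs
  imports Complex_Main
begin

definition subsum :: "(nat \<Rightarrow> real) \<Rightarrow> nat set \<Rightarrow> real" where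
  "subsum f B = (\<Sum>n. if n \<in> B then f n else 0)"

definition achievement_set :: "(nat \<Rightarrow> real) \<Rightarrow> (nat \<Rightarrow> real) \<Rightarrow> (real \<times> real) set" where
  "achievement_set x y = {(subsum x B, subsum y B) | B. B \<subseteq> (UNIV :: nat set)}"

definition rect_gap :: "(real \<times> real) set \<Rightarrow> real \<Rightarrow> real \<Rightarrow> real \<Rightarrow> real \<Rightarrow> bool" where
  "rect_gap A a b c d \<longleftrightarrow> a < b \<and> c < d \<and>
     ({a..b} \<times> {c..d}) \<inter> A = {(a, c), (b, d)}"

definition x_gap :: "(real \<times> real) set \<Rightarrow> real \<Rightarrow> real \<Rightarrow> bool" where
  "x_gap A a b \<longleftrightarrow> a < b \<and> (\<exists>c d. (a, c) \<in> A \<and> (b, d) \<in> A) \<and>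
     ({a<..<b} \<times> UNIV) \<inter> A = {}"

definition y_gap :: "(real \<times> real) set \<Rightarrow> real \<Rightarrow> real \<Rightarrow> bool" where
  "y_gap A c d \<longleftrightarrow> c < d \<and> (\<exists>a b. (a, c) \<in> A \<and> (b, d) \<in> A) \<and>
     (UNIV \<times> {c<..<d}) \<inter> A = {}"

end

theory Submission
  imports Defs
begin

lemma masked_summable:
  fixes f :: "nat \<Rightarrow> real"
  assumes "\<And>n. f n \<ge> 0" "summable f"
  shows "summable (\<lambda>n. if n \<in> B then f n else 0)"
  by (rule summable_comparison_test[OF _ assms(2)]) (auto simp: assms(1))

lemma subsum_mono:
  fixes f :: "nat \<Rightarrow> real"
  assumes "\<And>n. f n \<ge> 0" "summable f" "B \<subseteq> C"
  shows "subsum f B \<le> subsum f C"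
  unfolding subsum_def
  by (rule suminf_le) (use assms masked_summable[OF assms(1,2)] in auto)

lemma subsum_single: "subsum f {m} = f m"
proof -
  have "(\<lambda>n. if n \<in> {m} then f n else 0) = (\<lambda>n. if n = m then f n else 0)" by auto
  then show ?thesis unfolding subsum_def using sums_single[of m f] sums_unique by metis
qed

lemma subsum_ge_elem:
  fixes f :: "nat \<Rightarrow> real"
  assumes "\<And>n. f n \<ge> 0" "summable f" "m \<in> B"
  shows "f m \<le> subsum f B"
  using subsum_mono[OF assms(1,2), of "{m}" B] assms(3) subsum_single[of f m] by auto

lemma dichotomy:
  fixes f :: "nat \<Rightarrow> real"
  assumes "\<And>n. f n \<ge> 0" "summable f"
  shows "(B \<subseteq> {n. f n < f k} \<and> subsum f B \<le> subsum f {n. f n < f k})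
     \<or> (\<exists>m\<in>B. f m \<ge> f k \<and> subsum f B \<ge> f k)"
proof (cases "B \<subseteq> {n. f n < f k}")
  case True then show ?thesis using subsum_mono[OF assms] by auto
next
  case False
  then obtain m where "m \<in> B" "f m \<ge> f k" by (auto simp: subset_iff not_less)
  then show ?thesis using subsum_ge_elem[OF assms] by force
qed

theorem mainTheorem16:
  fixes x y :: "nat \<Rightarrow> real" and k :: nat
  assumes nonneg_x: "\<And>n. x n \<ge> 0"
      and nonneg_y: "\<And>n. y n \<ge> 0"
      and conv_x: "summable x"
      and conv_y: "summable y"
  shows "(x k > subsum x {n. x n < x k} \<longrightarrow>
            x_gap (achievement_set x y) (subsum x {n. x n < x k}) (x k))
       \<and> (y k > subsum y {n. y n < y k} \<longrightarrow>
            y_gap (achievement_set x y) (subsum y {n. y n < y k}) (y k))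
       \<and> ({n. x n < x k} = {n. y n < y k} \<longrightarrow>
            x k > subsum x {n. x n < x k} \<longrightarrow> y k > subsum y {n. x n < x k} \<longrightarrow>
            rect_gap (achievement_set x y) (subsum x {n. x n < x k}) (x k)
                     (subsum y {n. x n < x k}) (y k))"
proof (intro conjI impI)
  have memE: "(subsum x B, subsum y B) \<in> achievement_set x y" for B
    unfolding achievement_set_def by blast
  have Einv: "p \<in> achievement_set x y \<Longrightarrow> \<exists>B. p = (subsum x B, subsum y B)" for p
    unfolding achievement_set_def by blast
  note dx = dichotomy[OF nonneg_x conv_x] and dy = dichotomy[OF nonneg_y conv_y]
  show "x_gap (achievement_set x y) (subsum x {n. x n < x k}) (x k)"
    if "x k > subsum x {n. x n < x k}"
    unfolding x_gap_def
  proof (intro conjI)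
    show "\<exists>c d. (subsum x {n. x n < x k}, c) \<in> achievement_set x y \<and> (x k, d) \<in> achievement_set x y"
      using memE[of "{n. x n < x k}"] memE[of "{k}"] by (auto simp: subsum_single)
    show "({subsum x {n. x n < x k}<..<x k} \<times> UNIV) \<inter> achievement_set x y = {}"
    proof (rule ccontr)
      assume "\<not> ?thesis"
      then obtain p where "p \<in> achievement_set x y" "fst p \<in> {subsum x {n. x n < x k}<..<x k}" by (metis (no_types, lifting) IntE SigmaE all_not_in_conv fst_conv)
      then obtain B where "p = (subsum x B, subsum y B)" using Einv by blast
      moreover have "subsum x B \<le> subsum x {n. x n < x k} \<or> subsum x B \<ge> x k" using dx[of B k] by blast
      ultimately show False using \<open>fst p \<in> _\<close> by auto
    qed
  qed (use that in auto)
  show "y_gap (achievement_set x y) (subsum y {n. y n < y k}) (y k)"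
    if "y k > subsum y {n. y n < y k}"
    unfolding y_gap_def
  proof (intro conjI)
    show "\<exists>a b. (a, subsum y {n. y n < y k}) \<in> achievement_set x y \<and> (b, y k) \<in> achievement_set x y"
      using memE[of "{n. y n < y k}"] memE[of "{k}"] by (auto simp: subsum_single)
    show "(UNIV \<times> {subsum y {n. y n < y k}<..<y k}) \<inter> achievement_set x y = {}"
    proof (rule ccontr)
      assume "\<not> ?thesis"
      then obtain p where "p \<in> achievement_set x y" "snd p \<in> {subsum y {n. y n < y k}<..<y k}" by (metis (no_types, lifting) IntE SigmaE all_not_in_conv snd_conv)
      then obtain B where "p = (subsum x B, subsum y B)" using Einv by blast
      moreover have "subsum y B \<le> subsum y {n. y n < y k} \<or> subsum y B \<ge> y k" using dy[of B k] by blast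
      ultimately show False using \<open>snd p \<in> _\<close> by auto
    qed
  qed (use that in auto)
  show "rect_gap (achievement_set x y) (subsum x {n. x n < x k}) (x k)
                     (subsum y {n. x n < x k}) (y k)"
    if eq: "{n. x n < x k} = {n. y n < y k}" and hx: "x k > subsum x {n. x n < x k}"
      and hy: "y k > subsum y {n. x n < x k}"
    unfolding rect_gap_def
  proof (intro conjI)
    show "({subsum x {n. x n < x k}..x k} \<times> {subsum y {n. x n < x k}..y k}) \<inter> achievement_set x y =
      {(subsum x {n. x n < x k}, subsum y {n. x n < x k}), (x k, y k)}"
    proof (intro equalityI subsetI)
      fix p assume p: "p \<in> ({subsum x {n. x n < x k}..x k} \<times> {subsum y {n. x n < x k}..y k}) \<inter> achievement_set x y"
      then obtain B where pB: "p = (subsum x B, subsum y B)" using Einv by blast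
      show "p \<in> {(subsum x {n. x n < x k}, subsum y {n. x n < x k}), (x k, y k)}"
      proof (cases "B \<subseteq> {n. x n < x k}")
        case True
        then have "B \<subseteq> {n. y n < y k}" using eq by (simp only:)
        note a1 = subsum_mono[OF nonneg_x conv_x True] and a2 = subsum_mono[OF nonneg_y conv_y \<open>B \<subseteq> {n. y n < y k}\<close>]
        have b1: "subsum x B \<ge> subsum x {n. x n < x k}" "subsum y B \<ge> subsum y {n. x n < x k}"
          using p pB by auto
        have "subsum x B = subsum x {n. x n < x k}" using a1 b1 by linarith
        moreover have "subsum y B = subsum y {n. x n < x k}" using a2 b1 eq by (simp only:)
        ultimately show ?thesis using pB by simp
      next
        case False
        then obtain m where m: "m \<in> B" "x m \<ge> x k" by (auto simp: subset_iff not_less)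
        then have "m \<notin> {n. y n < y k}" using eq by (metis mem_Collect_eq not_less)
        then have "y m \<ge> y k" by (simp add: not_less)
        have b1: "subsum x B \<le> x k" "subsum y B \<le> y k"
          using p pB by auto
        have "subsum x B = x k" using b1 m subsum_ge_elem[OF nonneg_x conv_x m(1)] by linarith
        moreover have "subsum y B = y k" using b1 \<open>y m \<ge> y k\<close> subsum_ge_elem[OF nonneg_y conv_y m(1)] by linarith
        ultimately show ?thesis using pB by simp
      qed
    next
      fix p assume "p \<in> {(subsum x {n. x n < x k}, subsum y {n. x n < x k}), (x k, y k)}"
      then show "p \<in> ({subsum x {n. x n < x k}..x k} \<times> {subsum y {n. x n < x k}..y k}) \<inter> achievement_set x y"
        using memE[of "{n. x n < x k}"] memE[of "{k}"] hx hy by (auto simp: subsum_single)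
    qed
  qed (use hx hy in auto)
qed

end
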